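(* The following statement is false: for all integers $m>a\geq0$ and $n>b\geq0$, an erasure pattern $\mathcal{E}\subseteq[m]\times[n]$ is correctable in the topology $T_{m\times n}(a,b,0)$ if and only if it is regular.
   Context: Positions of vectors in $\mathbb{F}^{mn}$ are identified with $[m]\times[n]$, $[k]=\{1,\dots,k\}$. For linear codes $\mathcal{C}_1\subseteq\mathbb{F}^m,\mathcal{C}_2\subseteq\mathbb{F}^n$, $\mathcal{C}_1\otimes\mathcal{C}_2$ is the row span of the Kronecker product of their generator matrices. A code for the topology $T_{m\times n}(a,b,0)$ is a linear code over a finite field $\mathbb{F}$ whose parity-check matrix is a parity-check matrix of $\mathcal{C}_{\mathsf{col}}\otimes\mathcal{C}_{\mathsf{row}}$, where $\mathcal{C}_{\mathsf{col}}$ is a linear $[m,\geq m-a]$ code and $\mathcal{C}_{\mathsf{row}}$ a linear $[n,\geq n-b]$ code over $\mathbb{F}$; $\mathbb{C}_{m\times n}(a,b,0)$ is the set of these codes (over any finite field). A code corrects an erasure pattern $\mathcal{E}$ if no two distinct codewords agree on all positions outside $\mathcal{E}$; $\mathcal{E}$ is correctable in $T_{m\times n}(a,b,0)$ if some code in $\mathbb{C}_{m\times n}(a,b,0)$ corrects it. An erasure pattern $\mathcal{E}\subseteq[m]\times[n]$ is regular if for all $\mathcal{U}\subseteq[m]$ with $|\mathcal{U}|=u\geq a$ and all $\mathcal{V}\subseteq[n]$ with $|\mathcal{V}|=v\geq b$ one has $|\mathcal{E}\cap(\mathcal{U}\times\mathcal{V})|\leq va+ub-ab$. *)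

theory Defs
  imports "HOL-Algebra.Ring"
begin

definition gen_matrix :: "'b ring \<Rightarrow> 'r set \<Rightarrow> 'p set \<Rightarrow> ('r \<Rightarrow> 'p \<Rightarrow> 'b) \<Rightarrow> bool" where
  "gen_matrix R K P G \<longleftrightarrow> finite K \<and> finite P \<and>
     (\<forall>i\<in>K. \<forall>j\<in>P. G i j \<in> carrier R) \<and>
     (\<forall>c. c \<in> K \<rightarrow> carrier R \<longrightarrow>
          (\<forall>j\<in>P. (\<Oplus>\<^bsub>R\<^esub> i\<in>K. c i \<otimes>\<^bsub>R\<^esub> G i j) = \<zero>\<^bsub>R\<^esub>) \<longrightarrow>
          (\<forall>i\<in>K. c i = \<zero>\<^bsub>R\<^esub>))"

definition row_span :: "'b ring \<Rightarrow> 'r set \<Rightarrow> 'p set \<Rightarrow> ('r \<Rightarrow> 'p \<Rightarrow> 'b) \<Rightarrow> ('p \<Rightarrow> 'b) set" where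
  "row_span R K P G = {(\<lambda>j\<in>P. (\<Oplus>\<^bsub>R\<^esub> i\<in>K. c i \<otimes>\<^bsub>R\<^esub> G i j)) | c. c \<in> K \<rightarrow> carrier R}"

definition kron :: "'b ring \<Rightarrow> ('r \<Rightarrow> 'p \<Rightarrow> 'b) \<Rightarrow> ('s \<Rightarrow> 'q \<Rightarrow> 'b) \<Rightarrow> ('r \<times> 's \<Rightarrow> 'p \<times> 'q \<Rightarrow> 'b)" where
  "kron R G1 G2 = (\<lambda>(i1, i2) (r, s). G1 i1 r \<otimes>\<^bsub>R\<^esub> G2 i2 s)"

definition corrects :: "('p \<Rightarrow> 'b) set \<Rightarrow> 'p set \<Rightarrow> 'p set \<Rightarrow> bool" where
  "corrects C P E \<longleftrightarrow> (\<forall>x\<in>C. \<forall>y\<in>C. (\<forall>p\<in>P - E. x p = y p) \<longrightarrow> x = y)"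

text \<open>Correctable in T_{m x n}(a,b,0): some finite field (represented with carrier in nat,
  which covers every finite field up to isomorphism), some column code [m, >= m-a] with
  generator matrix G1 and row code [n, >= n-b] with generator matrix G2, such that the
  tensor code (row span of the Kronecker product) corrects E.\<close>
definition correctable :: "nat \<Rightarrow> nat \<Rightarrow> nat \<Rightarrow> nat \<Rightarrow> (nat \<times> nat) set \<Rightarrow> bool" where
  "correctable m n a b E \<longleftrightarrow>
     (\<exists>(R :: nat ring) (K1 :: nat set) (K2 :: nat set) G1 G2.
        field R \<and> finite (carrier R) \<and>
        gen_matrix R K1 {1..m} G1 \<and> card K1 \<ge> m - a \<and>
        gen_matrix R K2 {1..n} G2 \<and> card K2 \<ge> n - b \<and>
        corrects (row_span R (K1 \<times> K2) ({1..m} \<times> {1..n}) (kron R G1 G2))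
                 ({1..m} \<times> {1..n}) E)"

definition regular :: "nat \<Rightarrow> nat \<Rightarrow> nat \<Rightarrow> nat \<Rightarrow> (nat \<times> nat) set \<Rightarrow> bool" where
  "regular m n a b E \<longleftrightarrow>
     (\<forall>U V. U \<subseteq> {1..m} \<and> V \<subseteq> {1..n} \<and> card U \<ge> a \<and> card V \<ge> b \<longrightarrow>
        int (card (E \<inter> (U \<times> V))) \<le> int (card V) * int a + int (card U) * int b - int a * int b)"

end

theory Submission
  imports Defs
begin

lemma (in abelian_monoid) finsum_Times:
  assumes "finite A" "finite B" "\<And>a b. a \<in> A \<Longrightarrow> b \<in> B \<Longrightarrow> f a b \<in> carrier G"
  shows "(\<Oplus>p\<in>A \<times> B. f (fst p) (snd p)) = (\<Oplus>a\<in>A. \<Oplus>b\<in>B. f a b)"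
  using assms(1,3)
proof (induction A rule: finite_induct)
  case empty
  then show ?case by simp
next
  case (insert x A)
  have eq: "insert x A \<times> B = ({x} \<times> B) \<union> (A \<times> B)" by auto
  have d: "({x} \<times> B) \<inter> (A \<times> B) = {}" using insert by auto
  have "(\<Oplus>p\<in>insert x A \<times> B. f (fst p) (snd p)) =
        (\<Oplus>p\<in>{x} \<times> B. f (fst p) (snd p)) \<oplus> (\<Oplus>p\<in>A \<times> B. f (fst p) (snd p))"
    unfolding eq using insert assms(2) by (intro finsum_Un_disjoint) (auto simp: Pi_def)
  also have "(\<Oplus>p\<in>{x} \<times> B. f (fst p) (snd p)) = (\<Oplus>b\<in>B. f x b)"
  proof -
    have "{x} \<times> B = (\<lambda>b. (x, b)) ` B" by auto
    then have "(\<Oplus>p\<in>{x} \<times> B. f (fst p) (snd p)) = (\<Oplus>p\<in>(\<lambda>b. (x, b)) ` B. f (fst p) (snd p))" by simp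
    also have "\<dots> = (\<Oplus>b\<in>B. f x b)"
      by (subst finsum_reindex) (use insert in \<open>auto simp: Pi_def inj_on_def\<close>)
    finally show ?thesis .
  qed
  also have "(\<Oplus>p\<in>A \<times> B. f (fst p) (snd p)) = (\<Oplus>a\<in>A. \<Oplus>b\<in>B. f a b)"
    using insert by auto
  also have "(\<Oplus>b\<in>B. f x b) \<oplus> (\<Oplus>a\<in>A. \<Oplus>b\<in>B. f a b) = (\<Oplus>a\<in>insert x A. \<Oplus>b\<in>B. f a b)"
    using insert by (subst finsum_insert) (auto simp: Pi_def)
  finally show ?case .
qed

context field
begin
lemma t1: "g \<in> Units R \<Longrightarrow> s \<in> carrier R \<Longrightarrow> \<ominus> (inv g \<otimes> s) \<otimes> g \<oplus> s = \<zero>"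
proof -
  assume g: "g \<in> Units R" and s: "s \<in> carrier R"
  have gc: "g \<in> carrier R" "inv g \<in> carrier R" using g by auto
  have "\<ominus> (inv g \<otimes> s) \<otimes> g = \<ominus> ((inv g \<otimes> g) \<otimes> s)"
    using gc s by (simp add: l_minus m_assoc m_comm[of s g])
  also have "\<dots> = \<ominus> s" using g s by (simp add: Units_l_inv)
  finally show ?thesis using s by (simp add: l_neg)
qed
lemma t2: "c \<in> carrier R \<Longrightarrow> a \<in> carrier R \<Longrightarrow> b \<in> carrier R \<Longrightarrow> g \<in> carrier R \<Longrightarrow>
   c \<otimes> (a \<oplus> b \<otimes> g) = c \<otimes> a \<oplus> b \<otimes> (c \<otimes> g)"
  by (simp add: r_distr m_lcomm)
lemma t3: "i \<in> carrier R \<Longrightarrow> s \<in> carrier R \<Longrightarrow> F \<in> carrier R \<Longrightarrow> T \<in> carrier R \<Longrightarrow>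
   \<ominus> (i \<otimes> s) \<otimes> F \<oplus> T = T \<oplus> \<ominus> (F \<otimes> i) \<otimes> s"
proof -
  assume a: "i \<in> carrier R" "s \<in> carrier R" "F \<in> carrier R" "T \<in> carrier R"
  have "\<ominus> (i \<otimes> s) \<otimes> F = \<ominus> ((i \<otimes> s) \<otimes> F)" using a by (simp add: l_minus)
  also have "\<dots> = \<ominus> ((F \<otimes> i) \<otimes> s)" using a by (simp add: m_ac)
  also have "\<dots> = \<ominus> (F \<otimes> i) \<otimes> s" using a by (simp add: l_minus)
  finally have "\<ominus> (i \<otimes> s) \<otimes> F = \<ominus> (F \<otimes> i) \<otimes> s" .
  then show ?thesis using a by (simp add: a_comm)
qed

lemma LS:
  assumes "finite J"
  shows "finite K \<Longrightarrow> card J < card K \<Longrightarrow> (\<And>j i. j \<in> J \<Longrightarrow> i \<in> K \<Longrightarrow> f j i \<in> carrier R) \<Longrightarrow>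
    \<exists>c\<in>K \<rightarrow> carrier R. (\<exists>i\<in>K. c i \<noteq> \<zero>) \<and> (\<forall>j\<in>J. (\<Oplus>i\<in>K. c i \<otimes> f j i) = \<zero>)"
  using assms
proof (induction J arbitrary: K f rule: finite_induct)
  case empty
  then obtain k where k: "k \<in> K" by fastforce
  show ?case
    by (rule bexI[of _ "\<lambda>i. if i = k then \<one> else \<zero>"]) (use k in auto)
next
  case (insert j0 J)
  let ?g = "f j0"
  show ?case
  proof (cases "\<forall>i\<in>K. ?g i = \<zero>")
    case True
    have "card J < card K" using insert by simp
    then obtain c where c: "c \<in> K \<rightarrow> carrier R" "\<exists>i\<in>K. c i \<noteq> \<zero>"
        "\<forall>j\<in>J. (\<Oplus>i\<in>K. c i \<otimes> f j i) = \<zero>"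
      using insert.IH[of K f] insert.prems by blast
    have "(\<Oplus>i\<in>K. c i \<otimes> f j0 i) = (\<Oplus>i\<in>K. \<zero>)"
      by (rule finsum_cong') (use True c in \<open>auto simp: Pi_def\<close>)
    then have "(\<Oplus>i\<in>K. c i \<otimes> f j0 i) = \<zero>" by simp
    then show ?thesis using c by auto
  next
    case False
    then obtain k0 where k0: "k0 \<in> K" "?g k0 \<noteq> \<zero>" by blast
    define g0 where "g0 = ?g k0"
    have g0c: "g0 \<in> carrier R" using insert.prems k0 g0_def by auto
    have g0u: "g0 \<in> Units R" using field_Units g0c k0 g0_def by auto
    define K' where "K' = K - {k0}"
    define f' where "f' = (\<lambda>j i. f j i \<oplus> (\<ominus> (f j k0 \<otimes> inv g0)) \<otimes> ?g i)"
    have finK': "finite K'" using insert.prems K'_def by auto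
    have cardK': "card J < card K'" using insert.prems insert.hyps k0 K'_def by auto
    have f'c: "\<And>j i. j \<in> J \<Longrightarrow> i \<in> K' \<Longrightarrow> f' j i \<in> carrier R"
    proof -
      fix j i assume ji: "j \<in> J" "i \<in> K'"
      have "f j i \<in> carrier R" "f j k0 \<in> carrier R" "?g i \<in> carrier R" "inv g0 \<in> carrier R"
        using insert.prems(3) ji k0 g0u K'_def by auto
      then show "f' j i \<in> carrier R" unfolding f'_def by simp
    qed
    obtain c' where c': "c' \<in> K' \<rightarrow> carrier R" "\<exists>i\<in>K'. c' i \<noteq> \<zero>"
        "\<forall>j\<in>J. (\<Oplus>i\<in>K'. c' i \<otimes> f' j i) = \<zero>"
    proof -
      have ex: "\<exists>c\<in>K' \<rightarrow> carrier R. (\<exists>i\<in>K'. c i \<noteq> \<zero>) \<and> (\<forall>j\<in>J. (\<Oplus>i\<in>K'. c i \<otimes> f' j i) = \<zero>)"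
        by (rule insert.IH[OF finK' cardK' f'c])
      show ?thesis using ex that by blast
    qed
    define s where "s = (\<Oplus>i\<in>K'. c' i \<otimes> ?g i)"
    have sc: "s \<in> carrier R" unfolding s_def using c' insert.prems K'_def by (auto intro!: finsum_closed)
    define c where "c = (\<lambda>i. if i = k0 then \<ominus> (inv g0 \<otimes> s) else c' i)"
    have cK: "c \<in> K \<rightarrow> carrier R" unfolding c_def using c' sc g0u K'_def by (auto simp: Pi_def Units_inv_closed)
    have Kins: "K = insert k0 K'" "k0 \<notin> K'" using k0 K'_def by auto
    have split: "(\<Oplus>i\<in>K. c i \<otimes> h i) = c k0 \<otimes> h k0 \<oplus> (\<Oplus>i\<in>K'. c' i \<otimes> h i)"
      if h: "\<And>i. i \<in> K \<Longrightarrow> h i \<in> carrier R" for h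
    proof -
      have "(\<Oplus>i\<in>K. c i \<otimes> h i) = c k0 \<otimes> h k0 \<oplus> (\<Oplus>i\<in>K'. c i \<otimes> h i)"
        apply (subst Kins(1))
        apply (rule finsum_insert)
        using finK' Kins cK h by (auto simp: Pi_def)
      also have "(\<Oplus>i\<in>K'. c i \<otimes> h i) = (\<Oplus>i\<in>K'. c' i \<otimes> h i)"
        by (rule finsum_cong') (use c' h Kins in \<open>auto simp: c_def\<close>)
      finally show ?thesis .
    qed
    have gc: "\<And>i. i \<in> K \<Longrightarrow> ?g i \<in> carrier R" using insert.prems by auto
    have eq0: "(\<Oplus>i\<in>K. c i \<otimes> ?g i) = \<zero>"
    proof -
      have "(\<Oplus>i\<in>K. c i \<otimes> ?g i) = \<ominus> (inv g0 \<otimes> s) \<otimes> g0 \<oplus> s"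
        using split[OF gc] unfolding s_def c_def g0_def by simp
      also have "\<dots> = \<zero>" by (rule t1[OF g0u sc])
      finally show ?thesis .
    qed
    have eqJ: "(\<Oplus>i\<in>K. c i \<otimes> f j i) = \<zero>" if j: "j \<in> J" for j
    proof -
      have fjc: "\<And>i. i \<in> K \<Longrightarrow> f j i \<in> carrier R" using insert.prems j by auto
      define b where "b = \<ominus> (f j k0 \<otimes> inv g0)"
      have bc: "b \<in> carrier R" unfolding b_def using fjc k0 g0u by auto
      define T where "T = (\<Oplus>i\<in>K'. c' i \<otimes> f j i)"
      have Tc: "T \<in> carrier R" unfolding T_def using c' fjc Kins by (auto intro!: finsum_closed)
      have "\<zero> = (\<Oplus>i\<in>K'. c' i \<otimes> f' j i)" using c' j by auto
      also have "\<dots> = (\<Oplus>i\<in>K'. c' i \<otimes> f j i \<oplus> b \<otimes> (c' i \<otimes> ?g i))"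
      proof (rule finsum_cong')
        show "(\<lambda>i. c' i \<otimes> f j i \<oplus> b \<otimes> (c' i \<otimes> ?g i)) \<in> K' \<rightarrow> carrier R"
          using c' fjc gc bc Kins by (auto simp: Pi_def)
        fix i assume i: "i \<in> K'"
        have cc: "c' i \<in> carrier R" "f j i \<in> carrier R" "?g i \<in> carrier R"
          using i c' fjc gc Kins by auto
        show "c' i \<otimes> f' j i = c' i \<otimes> f j i \<oplus> b \<otimes> (c' i \<otimes> ?g i)"
          unfolding f'_def b_def[symmetric] by (rule t2[OF cc(1) cc(2) bc cc(3)])
      qed simp
      also have "\<dots> = T \<oplus> (\<Oplus>i\<in>K'. b \<otimes> (c' i \<otimes> ?g i))"
        unfolding T_def
        by (rule finsum_addf) (use c' fjc gc bc Kins in \<open>auto simp: Pi_def\<close>)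
      also have "(\<Oplus>i\<in>K'. b \<otimes> (c' i \<otimes> ?g i)) = b \<otimes> s"
        unfolding s_def
        by (rule finsum_rdistr[symmetric]) (use c' gc bc Kins finK' in \<open>auto simp: Pi_def\<close>)
      finally have z: "\<zero> = T \<oplus> b \<otimes> s" .
      have "(\<Oplus>i\<in>K. c i \<otimes> f j i) = \<ominus> (inv g0 \<otimes> s) \<otimes> f j k0 \<oplus> T"
        using split[OF fjc] unfolding T_def c_def by simp
      also have "\<dots> = T \<oplus> b \<otimes> s"
        unfolding b_def using fjc k0 g0u sc Tc by (intro t3) auto
      finally show ?thesis using z by simp
    qed
    show ?thesis
    proof (rule bexI[OF _ cK], intro conjI)
      show "\<exists>i\<in>K. c i \<noteq> \<zero>" using c' Kins unfolding c_def by auto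
      show "\<forall>j\<in>insert j0 J. (\<Oplus>i\<in>K. c i \<otimes> f j i) = \<zero>" using eq0 eqJ by auto
    qed
  qed
qed

end

locale my_cring = cring R for R :: "'a ring" (structure)
locale my_field = field R for R :: "'a ring" (structure)
sublocale my_field \<subseteq> my_cring ..

context my_cring begin

lemma rs_intro: "c \<in> K \<rightarrow> carrier R \<Longrightarrow> (\<lambda>j\<in>P. (\<Oplus>i\<in>K. c i \<otimes> G i j)) \<in> row_span R K P G"
  unfolding row_span_def by blast

lemma rs_carrier:
  assumes "x \<in> row_span R K P G" "finite K" "\<And>i j. i \<in> K \<Longrightarrow> j \<in> P \<Longrightarrow> G i j \<in> carrier R" "j \<in> P"
  shows "x j \<in> carrier R"
proof -
  obtain c where c: "c \<in> K \<rightarrow> carrier R" "x = (\<lambda>j\<in>P. (\<Oplus>i\<in>K. c i \<otimes> G i j))"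
    using assms(1) unfolding row_span_def by blast
  show ?thesis using c assms(3,4) by (auto intro!: finsum_closed simp: Pi_def)
qed

lemma zero_rs:
  assumes "\<And>i j. i \<in> K \<Longrightarrow> j \<in> P \<Longrightarrow> G i j \<in> carrier R"
  shows "(\<lambda>j\<in>P. \<zero>) \<in> row_span R K P G"
proof -
  have "(\<lambda>j\<in>P. (\<Oplus>i\<in>K. (\<lambda>_. \<zero>) i \<otimes> G i j)) = (\<lambda>j\<in>P. \<zero>)"
  proof (rule restrict_ext)
    fix j assume j: "j \<in> P"
    have "(\<Oplus>i\<in>K. (\<lambda>_. \<zero>) i \<otimes> G i j) = (\<Oplus>i\<in>K. \<zero>)"
      by (rule finsum_cong') (use assms j in auto)
    then show "(\<Oplus>i\<in>K. (\<lambda>_. \<zero>) i \<otimes> G i j) = \<zero>" by simp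
  qed
  then show ?thesis using rs_intro[where c="\<lambda>_. \<zero>" and K=K and P=P and G=G] by simp
qed

lemma lin_rs:
  assumes "u \<in> row_span R K P G" "v \<in> row_span R K P G" "\<mu> \<in> carrier R" "finite K"
    "\<And>i j. i \<in> K \<Longrightarrow> j \<in> P \<Longrightarrow> G i j \<in> carrier R"
  shows "(\<lambda>p\<in>P. u p \<oplus> \<mu> \<otimes> v p) \<in> row_span R K P G"
proof -
  obtain c where c: "c \<in> K \<rightarrow> carrier R" "u = (\<lambda>j\<in>P. (\<Oplus>i\<in>K. c i \<otimes> G i j))"
    using assms(1) unfolding row_span_def by blast
  obtain d where d: "d \<in> K \<rightarrow> carrier R" "v = (\<lambda>j\<in>P. (\<Oplus>i\<in>K. d i \<otimes> G i j))"
    using assms(2) unfolding row_span_def by blast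
  define e where "e = (\<lambda>i. c i \<oplus> \<mu> \<otimes> d i)"
  have ec: "e \<in> K \<rightarrow> carrier R" using c d assms(3) by (auto simp: e_def Pi_def)
  have "(\<lambda>p\<in>P. u p \<oplus> \<mu> \<otimes> v p) = (\<lambda>j\<in>P. (\<Oplus>i\<in>K. e i \<otimes> G i j))"
  proof (rule restrict_ext)
    fix j assume j: "j \<in> P"
    have Gc: "\<And>i. i \<in> K \<Longrightarrow> G i j \<in> carrier R" using assms(5) j by auto
    have "(\<Oplus>i\<in>K. e i \<otimes> G i j) = (\<Oplus>i\<in>K. c i \<otimes> G i j \<oplus> \<mu> \<otimes> (d i \<otimes> G i j))"
      by (rule finsum_cong') (use c d Gc assms(3) in \<open>auto simp: e_def Pi_def l_distr m_assoc\<close>)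
    also have "\<dots> = (\<Oplus>i\<in>K. c i \<otimes> G i j) \<oplus> (\<Oplus>i\<in>K. \<mu> \<otimes> (d i \<otimes> G i j))"
      by (rule finsum_addf) (use c d Gc assms(3) in \<open>auto simp: Pi_def\<close>)
    also have "(\<Oplus>i\<in>K. \<mu> \<otimes> (d i \<otimes> G i j)) = \<mu> \<otimes> (\<Oplus>i\<in>K. d i \<otimes> G i j)"
      by (rule finsum_rdistr[symmetric]) (use d Gc assms(3,4) in \<open>auto simp: Pi_def\<close>)
    finally show "u j \<oplus> \<mu> \<otimes> v j = (\<Oplus>i\<in>K. e i \<otimes> G i j)" using c d j by simp
  qed
  then show ?thesis using rs_intro[OF ec] by simp
qed

lemma tensor_rs:
  assumes "x \<in> row_span R K1 P1 G1" "y \<in> row_span R K2 P2 G2" "finite K1" "finite K2"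
    "\<And>i j. i \<in> K1 \<Longrightarrow> j \<in> P1 \<Longrightarrow> G1 i j \<in> carrier R"
    "\<And>i j. i \<in> K2 \<Longrightarrow> j \<in> P2 \<Longrightarrow> G2 i j \<in> carrier R"
  shows "(\<lambda>p\<in>P1 \<times> P2. x (fst p) \<otimes> y (snd p)) \<in> row_span R (K1 \<times> K2) (P1 \<times> P2) (kron R G1 G2)"
proof -
  obtain c where c: "c \<in> K1 \<rightarrow> carrier R" "x = (\<lambda>j\<in>P1. (\<Oplus>i\<in>K1. c i \<otimes> G1 i j))"
    using assms(1) unfolding row_span_def by blast
  obtain d where d: "d \<in> K2 \<rightarrow> carrier R" "y = (\<lambda>j\<in>P2. (\<Oplus>i\<in>K2. d i \<otimes> G2 i j))"
    using assms(2) unfolding row_span_def by blast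
  define z where "z = (\<lambda>q. c (fst q) \<otimes> d (snd q))"
  have zc: "z \<in> K1 \<times> K2 \<rightarrow> carrier R" using c d by (auto simp: z_def Pi_def)
  have "(\<lambda>p\<in>P1 \<times> P2. x (fst p) \<otimes> y (snd p)) =
        (\<lambda>p\<in>P1 \<times> P2. (\<Oplus>q\<in>K1 \<times> K2. z q \<otimes> kron R G1 G2 q p))"
  proof (rule restrict_ext)
    fix p assume p: "p \<in> P1 \<times> P2"
    obtain r s where rs: "p = (r, s)" "r \<in> P1" "s \<in> P2" using p by auto
    have G1c: "\<And>i. i \<in> K1 \<Longrightarrow> G1 i r \<in> carrier R" using assms(5) rs by auto
    have G2c: "\<And>i. i \<in> K2 \<Longrightarrow> G2 i s \<in> carrier R" using assms(6) rs by auto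
    have cc: "\<And>i. i \<in> K1 \<Longrightarrow> c i \<in> carrier R" using c by auto
    have dc: "\<And>i. i \<in> K2 \<Longrightarrow> d i \<in> carrier R" using d by auto
    have "(\<Oplus>q\<in>K1 \<times> K2. z q \<otimes> kron R G1 G2 q p) =
          (\<Oplus>q\<in>K1 \<times> K2. (\<lambda>a b. (c a \<otimes> d b) \<otimes> (G1 a r \<otimes> G2 b s)) (fst q) (snd q))"
      by (rule finsum_cong') (use cc dc G1c G2c rs in \<open>auto simp: z_def kron_def\<close>)
    also have "\<dots> = (\<Oplus>a\<in>K1. \<Oplus>b\<in>K2. (c a \<otimes> d b) \<otimes> (G1 a r \<otimes> G2 b s))"
      by (rule finsum_Times) (use assms(3,4) cc dc G1c G2c in auto)
    also have "\<dots> = (\<Oplus>a\<in>K1. (c a \<otimes> G1 a r) \<otimes> (\<Oplus>b\<in>K2. d b \<otimes> G2 b s))"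
    proof (rule finsum_cong')
      show "(\<lambda>a. (c a \<otimes> G1 a r) \<otimes> (\<Oplus>b\<in>K2. d b \<otimes> G2 b s)) \<in> K1 \<rightarrow> carrier R"
        using cc dc G1c G2c by (auto intro!: finsum_closed)
      fix a assume a: "a \<in> K1"
      have "(c a \<otimes> G1 a r) \<otimes> (\<Oplus>b\<in>K2. d b \<otimes> G2 b s) = (\<Oplus>b\<in>K2. (c a \<otimes> G1 a r) \<otimes> (d b \<otimes> G2 b s))"
        by (rule finsum_rdistr) (use a assms(4) cc dc G1c G2c in auto)
      also have "\<dots> = (\<Oplus>b\<in>K2. (c a \<otimes> d b) \<otimes> (G1 a r \<otimes> G2 b s))"
        by (rule finsum_cong') (use a cc dc G1c G2c in \<open>auto simp: m_ac\<close>)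
      finally show "(\<Oplus>b\<in>K2. (c a \<otimes> d b) \<otimes> (G1 a r \<otimes> G2 b s)) = (c a \<otimes> G1 a r) \<otimes> (\<Oplus>b\<in>K2. d b \<otimes> G2 b s)"
        by simp
    qed simp
    also have "\<dots> = (\<Oplus>a\<in>K1. c a \<otimes> G1 a r) \<otimes> (\<Oplus>b\<in>K2. d b \<otimes> G2 b s)"
      by (rule finsum_ldistr[symmetric]) (use assms(3) cc dc G1c G2c in \<open>auto intro!: finsum_closed\<close>)
    finally show "x (fst p) \<otimes> y (snd p) = (\<Oplus>q\<in>K1 \<times> K2. z q \<otimes> kron R G1 G2 q p)"
      using c d rs by simp
  qed
  then show ?thesis using rs_intro[OF zc] by simp
qed

lemma nocorr:
  assumes "W \<in> row_span R K P G" "\<And>i j. i \<in> K \<Longrightarrow> j \<in> P \<Longrightarrow> G i j \<in> carrier R"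
    "\<forall>p\<in>P - E. W p = \<zero>" "p0 \<in> P" "W p0 \<noteq> \<zero>"
  shows "\<not> corrects (row_span R K P G) P E"
proof
  assume co: "corrects (row_span R K P G) P E"
  have z: "(\<lambda>j\<in>P. \<zero>) \<in> row_span R K P G" by (rule zero_rs) (use assms(2) in auto)
  have "W = (\<lambda>j\<in>P. \<zero>)" using co assms(1,3) z unfolding corrects_def by auto
  then show False using assms(4,5) by simp
qed

end

context my_field begin

lemma nz_vec:
  assumes "gen_matrix R K P G" "Z \<subseteq> P" "card Z < card K"
  shows "\<exists>x\<in>row_span R K P G. (\<forall>j\<in>Z. x j = \<zero>) \<and> (\<exists>j\<in>P. x j \<noteq> \<zero>)"
proof -
  have fin: "finite K" "finite P" and Gc: "\<And>i j. i \<in> K \<Longrightarrow> j \<in> P \<Longrightarrow> G i j \<in> carrier R"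
    and ind: "\<And>c. c \<in> K \<rightarrow> carrier R \<Longrightarrow> (\<forall>j\<in>P. (\<Oplus>i\<in>K. c i \<otimes> G i j) = \<zero>) \<Longrightarrow> (\<forall>i\<in>K. c i = \<zero>)"
    using assms(1) unfolding gen_matrix_def by auto
  have finZ: "finite Z" using fin assms(2) finite_subset by blast
  obtain c where c: "c \<in> K \<rightarrow> carrier R" "\<exists>i\<in>K. c i \<noteq> \<zero>" "\<forall>j\<in>Z. (\<Oplus>i\<in>K. c i \<otimes> G i j) = \<zero>"
    using LS[OF finZ fin(1) assms(3), of "\<lambda>j i. G i j"] Gc assms(2) by blast
  define x where "x = (\<lambda>j\<in>P. (\<Oplus>i\<in>K. c i \<otimes> G i j))"
  have "x \<in> row_span R K P G" unfolding x_def by (rule rs_intro[OF c(1)])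
  moreover have "\<forall>j\<in>Z. x j = \<zero>" using c assms(2) unfolding x_def by auto
  moreover have "\<exists>j\<in>P. x j \<noteq> \<zero>"
  proof (rule ccontr)
    assume "\<not> (\<exists>j\<in>P. x j \<noteq> \<zero>)"
    then have "\<forall>j\<in>P. (\<Oplus>i\<in>K. c i \<otimes> G i j) = \<zero>" unfolding x_def by auto
    then show False using ind[OF c(1)] c(2) by blast
  qed
  ultimately show ?thesis by blast
qed

end


definition E0 :: "(nat \<times> nat) set" where
 "E0 = {(1,1),(1,2),(1,3),(1,4),(2,1),(2,2),(2,5),(3,1),(3,2),(3,5),(4,3),(4,4),(4,5),(5,3),(5,4),(5,5)}"

lemma outside_E0:
  assumes "p \<in> {1..5::nat} \<times> {1..5::nat} - E0"
  shows "p \<in> {(1,5),(2,3),(2,4),(3,3),(3,4),(4,1),(4,2),(5,1),(5,2)}"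
proof -
  have e: "{1..5::nat} = {1,2,3,4,5}" by auto
  show ?thesis using assms unfolding e E0_def by auto
qed

lemma (in my_field) notcorr_aux:
  assumes g1: "gen_matrix R K1 {1..5} G1" and k1: "card K1 \<ge> 3"
    and g2: "gen_matrix R K2 {1..5} G2" and k2: "card K2 \<ge> 3"
    and co: "corrects (row_span R (K1 \<times> K2) ({1..5} \<times> {1..5}) (kron R G1 G2)) ({1..5} \<times> {1..5}) E0"
  shows False
proof -
  define P where "P = {1..5::nat}"
  have fin1: "finite K1" and G1c: "\<And>i j. i \<in> K1 \<Longrightarrow> j \<in> P \<Longrightarrow> G1 i j \<in> carrier R"
    using g1 unfolding gen_matrix_def P_def by auto
  have fin2: "finite K2" and G2c: "\<And>i j. i \<in> K2 \<Longrightarrow> j \<in> P \<Longrightarrow> G2 i j \<in> carrier R"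
    using g2 unfolding gen_matrix_def P_def by auto
  have Kc: "\<And>q p. q \<in> K1 \<times> K2 \<Longrightarrow> p \<in> P \<times> P \<Longrightarrow> kron R G1 G2 q p \<in> carrier R"
    using G1c G2c by (auto simp: kron_def)
  define C where "C = row_span R (K1 \<times> K2) (P \<times> P) (kron R G1 G2)"
  have tens: "\<And>x y. x \<in> row_span R K1 P G1 \<Longrightarrow> y \<in> row_span R K2 P G2 \<Longrightarrow>
      (\<lambda>p\<in>P \<times> P. x (fst p) \<otimes> y (snd p)) \<in> C"
    unfolding C_def by (rule tensor_rs) (use fin1 fin2 G1c G2c in auto)
  have final: "False" if W: "W \<in> C" "\<forall>p\<in>P \<times> P - E0. W p = \<zero>" "p0 \<in> P \<times> P" "W p0 \<noteq> \<zero>" for W p0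
  proof -
    have "\<not> corrects C (P \<times> P) E0"
      unfolding C_def by (rule nocorr) (use W Kc in \<open>auto simp: C_def\<close>)
    then show False using co unfolding C_def P_def by simp
  qed
  have out: "\<And>p. p \<in> P \<times> P - E0 \<Longrightarrow> p \<in> {(1,5),(2,3),(2,4),(3,3),(3,4),(4,1),(4,2),(5,1),(5,2)}"
    unfolding P_def by (rule outside_E0)
  have P5: "P = {1,2,3,4,5}" unfolding P_def by auto
  have Pm: "1 \<in> P" "2 \<in> P" "3 \<in> P" "4 \<in> P" "5 \<in> P" unfolding P_def by auto
  have nz1: "\<And>Z. Z \<subseteq> P \<Longrightarrow> card Z < 3 \<Longrightarrow> \<exists>x\<in>row_span R K1 P G1. (\<forall>j\<in>Z. x j = \<zero>) \<and> (\<exists>j\<in>P. x j \<noteq> \<zero>)"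
    using nz_vec[OF g1[folded P_def]] k1 by force
  have nz2: "\<And>Z. Z \<subseteq> P \<Longrightarrow> card Z < 3 \<Longrightarrow> \<exists>x\<in>row_span R K2 P G2. (\<forall>j\<in>Z. x j = \<zero>) \<and> (\<exists>j\<in>P. x j \<noteq> \<zero>)"
    using nz_vec[OF g2[folded P_def]] k2 by force
  have rc1: "\<And>x j. x \<in> row_span R K1 P G1 \<Longrightarrow> j \<in> P \<Longrightarrow> x j \<in> carrier R"
    by (rule rs_carrier[where K=K1 and P=P and G=G1]) (use fin1 G1c in auto)
  have rc2: "\<And>x j. x \<in> row_span R K2 P G2 \<Longrightarrow> j \<in> P \<Longrightarrow> x j \<in> carrier R"
    by (rule rs_carrier[where K=K2 and P=P and G=G2]) (use fin2 G2c in auto)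

  obtain x where x: "x \<in> row_span R K1 P G1" "x 4 = \<zero>" "x 5 = \<zero>" "\<exists>j\<in>P. x j \<noteq> \<zero>"
    using nz1[of "{4,5}"] unfolding P_def by auto
  have xc: "\<And>j. j \<in> P \<Longrightarrow> x j \<in> carrier R" using rc1[OF x(1)] .
  have xcs: "x 1 \<in> carrier R" "x 2 \<in> carrier R" "x 3 \<in> carrier R" "x 4 \<in> carrier R" "x 5 \<in> carrier R"
    using xc Pm by auto
  obtain w where w: "w \<in> row_span R K2 P G2" "w 5 = \<zero>" "\<exists>j\<in>P. w j \<noteq> \<zero>"
    using nz2[of "{5}"] unfolding P_def by auto
  have wc: "\<And>j. j \<in> P \<Longrightarrow> w j \<in> carrier R" using rc2[OF w(1)] .
  have wcs: "w 1 \<in> carrier R" "w 2 \<in> carrier R" "w 3 \<in> carrier R" "w 4 \<in> carrier R" "w 5 \<in> carrier R"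
    using wc Pm by auto
  show False
  proof (cases "x 2 = \<zero> \<and> x 3 = \<zero>")
    case True
    have x1: "x 1 \<noteq> \<zero>" using x(2-4) True unfolding P5 by auto
    obtain j where j: "j \<in> P" "w j \<noteq> \<zero>" using w by auto
    define W where "W = (\<lambda>p\<in>P \<times> P. x (fst p) \<otimes> w (snd p))"
    show False
    proof (rule final)
      show "W \<in> C" unfolding W_def by (rule tens[OF x(1) w(1)])
      show "(1, j) \<in> P \<times> P" using j unfolding P_def by auto
      have "W (1, j) = x 1 \<otimes> w j" unfolding W_def using j Pm by simp
      then show "W (1, j) \<noteq> \<zero>" using x1 j xcs wc[OF j(1)] by (simp add: integral_iff)
      show "\<forall>p\<in>P \<times> P - E0. W p = \<zero>"
      proof
        fix p assume p: "p \<in> P \<times> P - E0"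
        then have "p \<in> {(1,5),(2,3),(2,4),(3,3),(3,4),(4,1),(4,2),(5,1),(5,2)}" by (rule out)
        moreover have "W p = x (fst p) \<otimes> w (snd p)" using p unfolding W_def by simp
        ultimately show "W p = \<zero>" using x True w xcs wcs by auto
      qed
    qed
  next
    case False
    then obtain i where i: "i \<in> {2,3}" "x i \<noteq> \<zero>" by auto
    obtain y where y: "y \<in> row_span R K2 P G2" "y 3 = \<zero>" "y 4 = \<zero>" "\<exists>j\<in>P. y j \<noteq> \<zero>"
      using nz2[of "{3,4}"] unfolding P_def by auto
    have yc: "\<And>j. j \<in> P \<Longrightarrow> y j \<in> carrier R" using rc2[OF y(1)] .
  have ycs: "y 1 \<in> carrier R" "y 2 \<in> carrier R" "y 3 \<in> carrier R" "y 4 \<in> carrier R" "y 5 \<in> carrier R"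
    using yc Pm by auto
    show False
    proof (cases "y 5 = \<zero>")
      case True
      obtain j where j: "j \<in> P" "y j \<noteq> \<zero>" using y by auto
      define W where "W = (\<lambda>p\<in>P \<times> P. x (fst p) \<otimes> y (snd p))"
      show False
      proof (rule final)
        show "W \<in> C" unfolding W_def by (rule tens[OF x(1) y(1)])
        show "(i, j) \<in> P \<times> P" using i j unfolding P_def by auto
        have "W (i, j) = x i \<otimes> y j" unfolding W_def using i j Pm by auto
        then show "W (i, j) \<noteq> \<zero>" using i j xc[of i] yc[OF j(1)] Pm by (auto simp: integral_iff)
        show "\<forall>p\<in>P \<times> P - E0. W p = \<zero>"
        proof
          fix p assume p: "p \<in> P \<times> P - E0"
          then have "p \<in> {(1,5),(2,3),(2,4),(3,3),(3,4),(4,1),(4,2),(5,1),(5,2)}" by (rule out)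
          moreover have "W p = x (fst p) \<otimes> y (snd p)" using p unfolding W_def by simp
          ultimately show "W p = \<zero>" using x True y xcs ycs by auto
        qed
      qed
    next
      case y5: False
      obtain x' where x': "x' \<in> row_span R K1 P G1" "x' 2 = \<zero>" "x' 3 = \<zero>" "\<exists>j\<in>P. x' j \<noteq> \<zero>"
        using nz1[of "{2,3}"] unfolding P_def by auto
      have x'c: "\<And>j. j \<in> P \<Longrightarrow> x' j \<in> carrier R" using rc1[OF x'(1)] .
  have x'cs: "x' 1 \<in> carrier R" "x' 2 \<in> carrier R" "x' 3 \<in> carrier R" "x' 4 \<in> carrier R" "x' 5 \<in> carrier R"
    using x'c Pm by auto
      obtain y' where y': "y' \<in> row_span R K2 P G2" "y' 1 = \<zero>" "y' 2 = \<zero>" "\<exists>j\<in>P. y' j \<noteq> \<zero>"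
        using nz2[of "{1,2}"] unfolding P_def by auto
      have y'c: "\<And>j. j \<in> P \<Longrightarrow> y' j \<in> carrier R" using rc2[OF y'(1)] .
  have y'cs: "y' 1 \<in> carrier R" "y' 2 \<in> carrier R" "y' 3 \<in> carrier R" "y' 4 \<in> carrier R" "y' 5 \<in> carrier R"
    using y'c Pm by auto
      show False
      proof (cases "x' 1 \<otimes> y' 5 = \<zero>")
        case True
        obtain j1 where j1: "j1 \<in> P" "x' j1 \<noteq> \<zero>" using x' by auto
        obtain j2 where j2: "j2 \<in> P" "y' j2 \<noteq> \<zero>" using y' by auto
        define W where "W = (\<lambda>p\<in>P \<times> P. x' (fst p) \<otimes> y' (snd p))"
        show False
        proof (rule final)
          show "W \<in> C" unfolding W_def by (rule tens[OF x'(1) y'(1)])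
          show "(j1, j2) \<in> P \<times> P" using j1 j2 by auto
          have "W (j1, j2) = x' j1 \<otimes> y' j2" unfolding W_def using j1 j2 by simp
          then show "W (j1, j2) \<noteq> \<zero>" using j1 j2 x'c[OF j1(1)] y'c[OF j2(1)] by (simp add: integral_iff)
          show "\<forall>p\<in>P \<times> P - E0. W p = \<zero>"
          proof
            fix p assume p: "p \<in> P \<times> P - E0"
            then have "p \<in> {(1,5),(2,3),(2,4),(3,3),(3,4),(4,1),(4,2),(5,1),(5,2)}" by (rule out)
            moreover have "W p = x' (fst p) \<otimes> y' (snd p)" using p unfolding W_def by simp
            ultimately show "W p = \<zero>" using x' True y' x'cs y'cs by auto
          qed
        qed
      next
        case dnz: False
        define d where "d = x' 1 \<otimes> y' 5"
        have dc: "d \<in> carrier R" unfolding d_def using x'cs y'cs by auto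
        have du: "d \<in> Units R" using dc dnz field_Units unfolding d_def by auto
        define a where "a = x 1 \<otimes> y 5"
        have ac: "a \<in> carrier R" unfolding a_def using xcs ycs by auto
        define \<mu> where "\<mu> = \<ominus> (a \<otimes> inv d)"
        have \<mu>c: "\<mu> \<in> carrier R" unfolding \<mu>_def using ac du by auto
        have \<mu>d: "\<mu> \<otimes> d = \<ominus> a"
        proof -
          have "\<mu> \<otimes> d = \<ominus> (a \<otimes> inv d \<otimes> d)" unfolding \<mu>_def using ac du dc by (simp add: l_minus)
          also have "a \<otimes> inv d \<otimes> d = a" using ac du dc by (simp add: m_assoc Units_l_inv)
          finally show ?thesis .
        qed
        define T1 where "T1 = (\<lambda>p\<in>P \<times> P. x (fst p) \<otimes> y (snd p))"
        define T2 where "T2 = (\<lambda>p\<in>P \<times> P. x' (fst p) \<otimes> y' (snd p))"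
        define W where "W = (\<lambda>p\<in>P \<times> P. T1 p \<oplus> \<mu> \<otimes> T2 p)"
        have Wv: "\<And>r s. r \<in> P \<Longrightarrow> s \<in> P \<Longrightarrow> W (r, s) = x r \<otimes> y s \<oplus> \<mu> \<otimes> (x' r \<otimes> y' s)"
          unfolding W_def T1_def T2_def by simp
        show False
        proof (rule final)
          have T1C: "T1 \<in> C" unfolding T1_def by (rule tens[OF x(1) y(1)])
          have T2C: "T2 \<in> C" unfolding T2_def by (rule tens[OF x'(1) y'(1)])
          show "W \<in> C" unfolding W_def C_def
            by (rule lin_rs[OF T1C[unfolded C_def] T2C[unfolded C_def] \<mu>c]) (use fin1 fin2 Kc in auto)
          show "(i, 5) \<in> P \<times> P" using i unfolding P_def by auto
          have "W (i, 5) = x i \<otimes> y 5" using i Wv[of i 5] x' xcs ycs x'cs y'cs \<mu>c Pm by auto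
          then show "W (i, 5) \<noteq> \<zero>" using i y5 xcs ycs by (auto simp: integral_iff)
          show "\<forall>p\<in>P \<times> P - E0. W p = \<zero>"
          proof
            fix p assume p: "p \<in> P \<times> P - E0"
            then have "p \<in> {(1,5),(2,3),(2,4),(3,3),(3,4),(4,1),(4,2),(5,1),(5,2)}" by (rule out)
            moreover have "W (1, 5) = \<zero>"
            proof -
              have "W (1, 5) = a \<oplus> \<mu> \<otimes> d" using Wv[of 1 5] Pm unfolding a_def d_def by simp
              also have "\<dots> = \<zero>" using \<mu>d ac by (simp add: r_neg)
              finally show ?thesis .
            qed
            moreover have "\<And>r s. r \<in> P \<Longrightarrow> s \<in> P \<Longrightarrow> (r, s) \<noteq> (1, 5) \<Longrightarrow> (r, s) \<in> {(2,3),(2,4),(3,3),(3,4),(4,1),(4,2),(5,1),(5,2)} \<Longrightarrow> W (r, s) = \<zero>"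
              using Wv x y x' y' xcs ycs x'cs y'cs \<mu>c by auto
            ultimately show "W p = \<zero>" using p by auto
          qed
        qed
      qed
    qed
  qed
qed

lemma notcorr: "\<not> correctable 5 5 2 2 E0"
proof
  assume "correctable 5 5 2 2 E0"
  then obtain R :: "nat ring" and K1 K2 :: "nat set" and G1 G2 where
    fR: "field R" and g1: "gen_matrix R K1 {1..5} G1" and k1: "card K1 \<ge> 3"
    and g2: "gen_matrix R K2 {1..5} G2" and k2: "card K2 \<ge> 3"
    and co: "corrects (row_span R (K1 \<times> K2) ({1..5} \<times> {1..5}) (kron R G1 G2)) ({1..5} \<times> {1..5}) E0"
    unfolding correctable_def by auto
  have "my_field R" using fR by (simp add: my_field_def)
  then show False using my_field.notcorr_aux[OF _ g1 k1 g2 k2 co] by blast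
qed


lemma reg_E0: "regular 5 5 2 2 E0"
proof -
  have "\<forall>U\<in>Pow {1..5::nat}. \<forall>V\<in>Pow {1..5::nat}. 2 \<le> card U \<longrightarrow> 2 \<le> card V \<longrightarrow>
     int (card (E0 \<inter> (U \<times> V))) \<le> int (card V) * int 2 + int (card U) * int 2 - int 2 * int 2"
    unfolding E0_def by code_simp
  then show ?thesis unfolding regular_def by blast
qed

theorem theorem3:
  shows "\<not> (\<forall>(m::nat) (n::nat) (a::nat) (b::nat) (E :: (nat \<times> nat) set).
            a < m \<longrightarrow> b < n \<longrightarrow> E \<subseteq> {1..m} \<times> {1..n} \<longrightarrow>
            (correctable m n a b E \<longleftrightarrow> regular m n a b E))"
proof
  assume H: "\<forall>(m::nat) (n::nat) (a::nat) (b::nat) (E :: (nat \<times> nat) set).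
            a < m \<longrightarrow> b < n \<longrightarrow> E \<subseteq> {1..m} \<times> {1..n} \<longrightarrow>
            (correctable m n a b E \<longleftrightarrow> regular m n a b E)"
  have sub: "E0 \<subseteq> {1..5} \<times> {1..5}" by (auto simp: E0_def)
  have "correctable 5 5 2 2 E0 \<longleftrightarrow> regular 5 5 2 2 E0"
    using H[rule_format, of 2 5 2 5 E0] sub by simp
  then show False using reg_E0 notcorr by simp
qed

end
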